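(* Let $\rho$ be a measurable c.n.d. kernel on $\mathcal{X}$ with $\rho(x,x)=0$ for all $x\in\mathcal{X}$, let $w:\mathcal{X}\to[0,1]$ be a measurable weight function, and let $v:\mathcal{X}\to\mathcal{X}$ be measurable. Then the threshold-weighted kernel score $\mathrm{tw}S_\rho(\cdot,\cdot;v)$ (as a scoring rule on $\mathcal{M}_{\tilde\rho}$, $\tilde\rho(x,x')=\rho(v(x),v(x'))$) is localising with respect to $w$ if and only if $\rho(v(z),v(x))=\rho(v(z'),v(x))$ for all $z,z'\in\{w=0\}$ and all $x\in\mathcal{X}$.
   Context: A kernel $\rho:\mathcal{X}\times\mathcal{X}\to\mathbb{R}$ is symmetric; it is conditionally negative definite (c.n.d.) if $\sum_{i,j}c_ic_j\rho(x_i,x_j)\le0$ for all finite choices $x_i\in\mathcal{X}$, $c_i\in\mathbb{R}$ with $\sum_ic_i=0$. Threshold-weighted kernel score: $\mathrm{tw}S_\rho(P,y;v)=\mathbb{E}_P[\rho(v(X),v(y))]-\tfrac12\mathbb{E}_P[\rho(v(X),v(X'))]-\tfrac12\rho(v(y),v(y))$ with $X,X'\sim P$ independent. $\mathcal{M}_{\tilde\rho}$ is the set of probability measures $P$ on $\mathcal{X}$ with $\mathbb{E}_P[\tilde\rho(X,x_0)]<\infty$ for some $x_0$. Write $\{w>0\}=\{x:w(x)>0\}$, $\{w=0\}=\{x:w(x)=0\}$. A scoring rule $S$ on a class $\mathcal{M}$ is localising with respect to $w$ if for all $P,Q\in\mathcal{M}$, $P(\cdot\cap\{w>0\})=Q(\cdot\cap\{w>0\})$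 implies $S(P,y)=S(Q,y)$ for all $y\in\mathcal{X}$. *)

theory Defs
  imports "HOL-Probability.Probability"
begin

definition cnd_kernel :: "'a measure \<Rightarrow> ('a \<Rightarrow> 'a \<Rightarrow> real) \<Rightarrow> bool" where
  "cnd_kernel M rho \<longleftrightarrow>
     (\<forall>x\<in>space M. \<forall>y\<in>space M. rho x y = rho y x) \<and>
     (\<forall>(n::nat) (x::nat \<Rightarrow> 'a) (c::nat \<Rightarrow> real).
        (\<forall>i<n. x i \<in> space M) \<longrightarrow> (\<Sum>i<n. c i) = 0 \<longrightarrow>
        (\<Sum>i<n. \<Sum>j<n. c i * c j * rho (x i) (x j)) \<le> 0)"

definition M_class :: "'a measure \<Rightarrow> ('a \<Rightarrow> 'a \<Rightarrow> real) \<Rightarrow> 'a measure set" where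
  "M_class M rt = {P. prob_space P \<and> sets P = sets M \<and>
      (\<exists>x0\<in>space M. (\<integral>\<^sup>+ x. ennreal (rt x x0) \<partial>P) < \<infinity>)}"

definition twS :: "('a \<Rightarrow> 'a \<Rightarrow> real) \<Rightarrow> ('a \<Rightarrow> 'a) \<Rightarrow> 'a measure \<Rightarrow> 'a \<Rightarrow> real" where
  "twS rho v P y =
     (\<integral>x. rho (v x) (v y) \<partial>P)
     - (1/2) * (\<integral>z. rho (v (fst z)) (v (snd z)) \<partial>(P \<Otimes>\<^sub>M P))
     - (1/2) * rho (v y) (v y)"

definition localising ::
  "'a measure \<Rightarrow> 'a measure set \<Rightarrow> ('a measure \<Rightarrow> 'a \<Rightarrow> real) \<Rightarrow> ('a \<Rightarrow> real) \<Rightarrow> bool" where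
  "localising M C S w \<longleftrightarrow>
     (\<forall>P\<in>C. \<forall>Q\<in>C.
        (\<forall>A\<in>sets M. emeasure P (A \<inter> {x\<in>space M. w x > 0})
                    = emeasure Q (A \<inter> {x\<in>space M. w x > 0}))
        \<longrightarrow> (\<forall>y\<in>space M. S P y = S Q y))"

end

theory Submission
  imports Defs
begin

lemma return_pair:
  assumes "x \<in> space M" "y \<in> space N"
  shows "return M x \<Otimes>\<^sub>M return N y = return (M \<Otimes>\<^sub>M N) (x, y)"
proof (rule pair_measure_eqI)
  show "sigma_finite_measure (return M x)"
    using prob_space_return[OF assms(1)] by (simp add: prob_space_imp_sigma_finite)
  show "sigma_finite_measure (return N y)"
    using prob_space_return[OF assms(2)] by (simp add: prob_space_imp_sigma_finite)
  show "sets (return M x \<Otimes>\<^sub>M return N y) = sets (return (M \<Otimes>\<^sub>M N) (x, y))"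
    by (simp cong: sets_pair_measure_cong)
  fix A B assume "A \<in> sets (return M x)" "B \<in> sets (return N y)"
  then show "emeasure (return M x) A * emeasure (return N y) B = emeasure (return (M \<Otimes>\<^sub>M N) (x, y)) (A \<times> B)"
    by (simp add: indicator_def)
qed

lemma twS_distr:
  assumes P: "prob_space P" "sets P = sets M"
    and pp1: "pp1 \<in> M \<rightarrow>\<^sub>M M"
    and rho_meas: "(\<lambda>z. rho (fst z) (snd z)) \<in> borel_measurable (M \<Otimes>\<^sub>M M)"
    and v_meas: "v \<in> M \<rightarrow>\<^sub>M M"
    and y: "y \<in> space M"
    and e1: "\<And>x. x \<in> space M \<Longrightarrow> rho (v x) (v y) = rho (v (pp1 x)) (v y)"
    and e2: "\<And>x x'. x \<in> space M \<Longrightarrow> x' \<in> space M \<Longrightarrow> rho (v x) (v x') = rho (v (pp1 x)) (v (pp1 x'))"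
  shows "twS rho v P y = twS rho v (distr P M pp1) y"
proof -
  have sp: "space P = space M" using P(2) by (rule sets_eq_imp_space_eq)
  have ppP: "pp1 \<in> P \<rightarrow>\<^sub>M M" unfolding measurable_cong_sets[OF P(2) refl] by (rule pp1)
  have f2: "(\<lambda>z. rho (v (fst z)) (v (snd z))) \<in> borel_measurable (M \<Otimes>\<^sub>M M)"
    using measurable_compose[OF measurable_Pair[OF measurable_compose[OF measurable_fst v_meas] measurable_compose[OF measurable_snd v_meas]] rho_meas]
    by (simp add: comp_def)
  have f1: "(\<lambda>x. rho (v x) (v y)) \<in> borel_measurable M"
    using measurable_compose[OF measurable_Pair[OF v_meas measurable_const[of "v y"]] rho_meas] v_meas y
    by (simp add: measurable_space)
  have I1: "(\<integral>x. rho (v x) (v y) \<partial>P) = (\<integral>x. rho (v x) (v y) \<partial>distr P M pp1)"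
    unfolding integral_distr[OF ppP f1]
  proof (rule Bochner_Integration.integral_cong)
    fix x assume "x \<in> space P" then show "rho (v x) (v y) = rho (v (pp1 x)) (v y)" using sp e1 by simp
  qed simp
  interpret D: prob_space "distr P M pp1" by (rule prob_space.prob_space_distr[OF P(1) ppP])
  have pd: "distr P M pp1 \<Otimes>\<^sub>M distr P M pp1 = distr (P \<Otimes>\<^sub>M P) (M \<Otimes>\<^sub>M M) (\<lambda>(x, y). (pp1 x, pp1 y))"
    by (rule pair_measure_distr[OF ppP ppP]) (simp add: D.sigma_finite_measure)
  have pp: "(\<lambda>(x, y). (pp1 x, pp1 y)) \<in> (P \<Otimes>\<^sub>M P) \<rightarrow>\<^sub>M (M \<Otimes>\<^sub>M M)"
    using ppP by measurable
  have I2: "(\<integral>z. rho (v (fst z)) (v (snd z)) \<partial>(P \<Otimes>\<^sub>M P)) = (\<integral>z. rho (v (fst z)) (v (snd z)) \<partial>(distr P M pp1 \<Otimes>\<^sub>M distr P M pp1))"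
    unfolding pd
    unfolding integral_distr[OF pp f2]
  proof (rule Bochner_Integration.integral_cong)
    fix z assume "z \<in> space (P \<Otimes>\<^sub>M P)" then show "rho (v (fst z)) (v (snd z)) = (\<lambda>z. rho (v (fst z)) (v (snd z))) ((\<lambda>(x, y). (pp1 x, pp1 y)) z)" using sp e2 by (auto simp: space_pair_measure split: prod.splits)
  qed simp
  show ?thesis unfolding twS_def I1 I2 ..
qed




theorem proposition4:
  fixes M :: "'a measure" and rho :: "'a \<Rightarrow> 'a \<Rightarrow> real"
    and w :: "'a \<Rightarrow> real" and v :: "'a \<Rightarrow> 'a"
  assumes rho_meas: "(\<lambda>z. rho (fst z) (snd z)) \<in> borel_measurable (M \<Otimes>\<^sub>M M)"
    and rho_cnd: "cnd_kernel M rho"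
    and rho_diag: "\<forall>x\<in>space M. rho x x = 0"
    and w_meas: "w \<in> borel_measurable M"
    and w_range: "\<forall>x\<in>space M. 0 \<le> w x \<and> w x \<le> 1"
    and v_meas: "v \<in> M \<rightarrow>\<^sub>M M"
  shows "localising M (M_class M (\<lambda>x x'. rho (v x) (v x'))) (twS rho v) w \<longleftrightarrow>
         (\<forall>z\<in>space M. \<forall>z'\<in>space M. w z = 0 \<longrightarrow> w z' = 0 \<longrightarrow>
            (\<forall>x\<in>space M. rho (v z) (v x) = rho (v z') (v x)))"
proof -
  have vsp: "\<And>x. x \<in> space M \<Longrightarrow> v x \<in> space M" using v_meas by (simp add: measurable_space)
  have sym: "\<And>x y. x \<in> space M \<Longrightarrow> y \<in> space M \<Longrightarrow> rho x y = rho y x"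
    using rho_cnd unfolding cnd_kernel_def by blast
  have f1: "\<And>y. y \<in> space M \<Longrightarrow> (\<lambda>x. rho (v x) (v y)) \<in> borel_measurable M"
  proof -
    fix y assume y: "y \<in> space M"
    show "(\<lambda>x. rho (v x) (v y)) \<in> borel_measurable M"
      using measurable_compose[OF measurable_Pair[OF v_meas measurable_const[of "v y"]] rho_meas] vsp y
      by simp
  qed
  have Bm: "{x\<in>space M. w x > 0} \<in> sets M" using w_meas by measurable
  have twS_ret: "\<And>z y. z \<in> space M \<Longrightarrow> y \<in> space M \<Longrightarrow> twS rho v (return M z) y = rho (v z) (v y)"
  proof -
    fix z y assume z: "z \<in> space M" and y: "y \<in> space M"
    have f2: "(\<lambda>z. rho (v (fst z)) (v (snd z))) \<in> borel_measurable (M \<Otimes>\<^sub>M M)"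
      using measurable_compose[OF measurable_Pair[OF measurable_compose[OF measurable_fst v_meas] measurable_compose[OF measurable_snd v_meas]] rho_meas]
      by (simp add: comp_def)
    have "(\<integral>x. rho (v x) (v y) \<partial>return M z) = rho (v z) (v y)"
      by (rule integral_return[OF z f1[OF y]])
    moreover have "(\<integral>p. rho (v (fst p)) (v (snd p)) \<partial>(return M z \<Otimes>\<^sub>M return M z)) = 0"
      unfolding return_pair[OF z z] using z rho_diag vsp
      by (subst integral_return[OF _ f2]) (auto simp: space_pair_measure)
    ultimately show "twS rho v (return M z) y = rho (v z) (v y)"
      unfolding twS_def using rho_diag vsp y by simp
  qed
  have retC: "\<And>z. z \<in> space M \<Longrightarrow> return M z \<in> M_class M (\<lambda>x x'. rho (v x) (v x'))"
  proof -
    fix z assume z: "z \<in> space M"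
    have "(\<integral>\<^sup>+ x. ennreal (rho (v x) (v z)) \<partial>return M z) = ennreal (rho (v z) (v z))"
      by (rule nn_integral_return[OF z]) (use f1[OF z] in measurable)
    then show "return M z \<in> M_class M (\<lambda>x x'. rho (v x) (v x'))"
      unfolding M_class_def using z prob_space_return[OF z] by (intro CollectI conjI bexI[of _ z]) simp_all
  qed
  show ?thesis
  proof
    assume L: "localising M (M_class M (\<lambda>x x'. rho (v x) (v x'))) (twS rho v) w"
    show "\<forall>z\<in>space M. \<forall>z'\<in>space M. w z = 0 \<longrightarrow> w z' = 0 \<longrightarrow>
            (\<forall>x\<in>space M. rho (v z) (v x) = rho (v z') (v x))"
    proof (intro ballI impI)
      fix z z' x assume z: "z \<in> space M" and z': "z' \<in> space M" and wz: "w z = 0" and wz': "w z' = 0"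
        and x: "x \<in> space M"
      have "\<forall>A\<in>sets M. emeasure (return M z) (A \<inter> {x\<in>space M. w x > 0})
                    = emeasure (return M z') (A \<inter> {x\<in>space M. w x > 0})"
        using Bm wz wz' by (auto simp: indicator_def)
      then have "twS rho v (return M z) x = twS rho v (return M z') x"
        using L retC[OF z] retC[OF z'] x unfolding localising_def by blast
      then show "rho (v z) (v x) = rho (v z') (v x)" using twS_ret z z' x by simp
    qed
  next
    assume R: "\<forall>z\<in>space M. \<forall>z'\<in>space M. w z = 0 \<longrightarrow> w z' = 0 \<longrightarrow>
            (\<forall>x\<in>space M. rho (v z) (v x) = rho (v z') (v x))"
    show "localising M (M_class M (\<lambda>x x'. rho (v x) (v x'))) (twS rho v) w"
      unfolding localising_def
    proof (intro ballI impI)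
      fix P Q y assume PC: "P \<in> M_class M (\<lambda>x x'. rho (v x) (v x'))"
        and QC: "Q \<in> M_class M (\<lambda>x x'. rho (v x) (v x'))"
        and agree: "\<forall>A\<in>sets M. emeasure P (A \<inter> {x\<in>space M. w x > 0})
                    = emeasure Q (A \<inter> {x\<in>space M. w x > 0})"
        and y: "y \<in> space M"
      have P: "prob_space P" "sets P = sets M" and Q: "prob_space Q" "sets Q = sets M"
        using PC QC unfolding M_class_def by auto
      have spP: "space P = space M" using P(2) by (rule sets_eq_imp_space_eq)
      have spQ: "space Q = space M" using Q(2) by (rule sets_eq_imp_space_eq)
      define B where "B = {x\<in>space M. w x > 0}"
      have BM: "B \<in> sets M" using Bm B_def by simp
      show "twS rho v P y = twS rho v Q y"
      proof (cases "\<exists>z0\<in>space M. w z0 = 0")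
        case False
        have "P = Q"
        proof (rule measure_eqI)
          show "sets P = sets Q" using P Q by simp
          fix A assume A: "A \<in> sets P"
          then have "A \<subseteq> space M" using spP sets.sets_into_space by blast
          then have "A \<inter> B = A" using False w_range unfolding B_def by force
          then show "emeasure P A = emeasure Q A" using agree A P(2) unfolding B_def by metis
        qed
        then show ?thesis by simp
      next
        case True
        then obtain z0 where z0: "z0 \<in> space M" "w z0 = 0" by blast
        define pp where "pp = (\<lambda>x. if w x > 0 then x else z0)"
        have ppm: "pp \<in> M \<rightarrow>\<^sub>M M" unfolding pp_def using w_meas z0 by measurable
        have ppsp: "\<And>x. x \<in> space M \<Longrightarrow> pp x \<in> space M" using z0 unfolding pp_def by auto
        have e1: "\<And>x y. x \<in> space M \<Longrightarrow> y \<in> space M \<Longrightarrow> rho (v x) (v y) = rho (v (pp x)) (v y)"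
        proof -
          fix x y assume x: "x \<in> space M" and y: "y \<in> space M"
          show "rho (v x) (v y) = rho (v (pp x)) (v y)"
          proof (cases "w x > 0")
            case True then show ?thesis unfolding pp_def by simp
          next
            case False then have "w x = 0" using w_range x by force
            then have "rho (v x) (v y) = rho (v z0) (v y)" using R x y z0 by blast
            then show ?thesis using False unfolding pp_def by simp
          qed
        qed
        have e2: "\<And>x x'. x \<in> space M \<Longrightarrow> x' \<in> space M \<Longrightarrow> rho (v x) (v x') = rho (v (pp x)) (v (pp x'))"
        proof -
          fix x x' assume x: "x \<in> space M" and x': "x' \<in> space M"
          have "rho (v x) (v x') = rho (v (pp x)) (v x')" by (rule e1[OF x x'])
          also have "\<dots> = rho (v x') (v (pp x))" using sym vsp ppsp x x' by simp
          also have "\<dots> = rho (v (pp x')) (v (pp x))" by (rule e1[OF x' ppsp[OF x]])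
          also have "\<dots> = rho (v (pp x)) (v (pp x'))" using sym vsp ppsp x x' by simp
          finally show "rho (v x) (v x') = rho (v (pp x)) (v (pp x'))" .
        qed
        have DD: "distr P M pp = distr Q M pp"
        proof (rule measure_eqI)
          show "sets (distr P M pp) = sets (distr Q M pp)" by simp
          fix A assume A: "A \<in> sets (distr P M pp)"
          then have AM: "A \<in> sets M" by simp
          have ppP: "pp \<in> P \<rightarrow>\<^sub>M M" unfolding measurable_cong_sets[OF P(2) refl] by (rule ppm)
          have ppQ: "pp \<in> Q \<rightarrow>\<^sub>M M" unfolding measurable_cong_sets[OF Q(2) refl] by (rule ppm)
          have pre: "pp -` A \<inter> space M = (A \<inter> B) \<union> (if z0 \<in> A then space M - B else {})"
            unfolding pp_def B_def using AM sets.sets_into_space[OF AM] z0 by (auto split: if_splits)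
          have PB: "emeasure P B = emeasure Q B"
            using agree sets.top[of M] unfolding B_def by (metis (no_types, lifting) sets.Int_space_eq1 Bm)
          have PcB: "emeasure P (space M - B) = emeasure Q (space M - B)"
          proof -
            have "emeasure P (space M - B) = emeasure P (space M) - emeasure P B"
              using BM P spP by (subst emeasure_Diff) (auto simp: B_def finite_measure.emeasure_finite prob_space_def)
            moreover have "emeasure Q (space M - B) = emeasure Q (space M) - emeasure Q B"
              using BM Q spQ by (subst emeasure_Diff) (auto simp: B_def finite_measure.emeasure_finite prob_space_def)
            moreover have "emeasure P (space M) = emeasure Q (space M)"
              using P Q spP spQ prob_space.emeasure_space_1 by metis
            ultimately show ?thesis using PB by simp
          qed
          have PAB: "emeasure P (A \<inter> B) = emeasure Q (A \<inter> B)" using agree AM unfolding B_def by blast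
          have "emeasure (distr P M pp) A = emeasure P (pp -` A \<inter> space M)"
            using emeasure_distr[OF ppP AM] spP by simp
          also have "\<dots> = emeasure Q (pp -` A \<inter> space M)"
          proof (cases "z0 \<in> A")
            case True
            have d: "(A \<inter> B) \<inter> (space M - B) = {}" by auto
            have "emeasure P (pp -` A \<inter> space M) = emeasure P (A \<inter> B) + emeasure P (space M - B)"
              unfolding pre using True AM BM P(2) by (simp add: plus_emeasure d)
            moreover have "emeasure Q (pp -` A \<inter> space M) = emeasure Q (A \<inter> B) + emeasure Q (space M - B)"
              unfolding pre using True AM BM Q(2) by (simp add: plus_emeasure d)
            ultimately show ?thesis using PAB PcB by simp
          next
            case False then show ?thesis unfolding pre using PAB by simp
          qed
          also have "\<dots> = emeasure (distr Q M pp) A"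
            using emeasure_distr[OF ppQ AM] spQ by simp
          finally show "emeasure (distr P M pp) A = emeasure (distr Q M pp) A" .
        qed
        have "twS rho v P y = twS rho v (distr P M pp) y"
          by (rule twS_distr[OF P ppm rho_meas v_meas y]) (auto intro: e1[OF _ y] e2)
        also have "\<dots> = twS rho v (distr Q M pp) y" using DD by simp
        also have "\<dots> = twS rho v Q y"
          by (rule twS_distr[OF Q ppm rho_meas v_meas y, symmetric]) (auto intro: e1[OF _ y] e2)
        finally show ?thesis .
      qed
    qed
  qed
qed

end
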